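(* Let $X$ be a set with at least four elements and let $\Lambda$ be a nontrivial finite distributive lattice. Then there exists an idempotent $e$ in the monoid $\Lambda^{X\times X}$ of $\Lambda$-generalized correspondences on $X$ such that the monoid $e\,\Lambda^{X\times X} e$ is isomorphic to the monoid of binary relations on a set of four elements.
   Context: A $\Lambda$-generalized correspondence on $X$ is a function $X\times X\to\Lambda$. The product of two such, $R$ and $S$, is defined by $RS(x,z)=\bigvee_{y\in X} R(x,y)\wedge S(y,z)$ for all $x,z\in X$; with this product the set $\Lambda^{X\times X}$ of all $\Lambda$-generalized correspondences is a monoid. The monoid of binary relations on a set $Y$ is the set of all subsets of $Y\times Y$ under composition of relations. Nontrivial means $\Lambda$ has more than one element. For an idempotent $e$, $eMe=\{eme : m\in M\}$ is a monoid with identity $e$. *)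

theory Defs
  imports Main "HOL-Library.Finite_Lattice"
begin

text \<open>A Lambda-generalized correspondence on X is a (curried) function X -> X -> Lambda.
  Product: (R S)(x,z) = Sup over y of (R x y) inf (S y z).\<close>

definition gc_mult :: "('x \<Rightarrow> 'x \<Rightarrow> 'l::complete_lattice) \<Rightarrow> ('x \<Rightarrow> 'x \<Rightarrow> 'l) \<Rightarrow> ('x \<Rightarrow> 'x \<Rightarrow> 'l)" where
  "gc_mult R S = (\<lambda>x z. SUP y. inf (R x y) (S y z))"

definition gc_corner :: "('x \<Rightarrow> 'x \<Rightarrow> 'l::complete_lattice) \<Rightarrow> ('x \<Rightarrow> 'x \<Rightarrow> 'l) set" where
  "gc_corner e = {gc_mult (gc_mult e m) e | m. True}"

definition corner_iso_rel :: "('x \<Rightarrow> 'x \<Rightarrow> 'l::complete_lattice) \<Rightarrow> 'y set \<Rightarrow>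
    (('x \<Rightarrow> 'x \<Rightarrow> 'l) \<Rightarrow> 'y rel) \<Rightarrow> bool" where
  "corner_iso_rel e Y \<phi> \<longleftrightarrow>
     bij_betw \<phi> (gc_corner e) (Pow (Y \<times> Y)) \<and>
     (\<forall>a\<in>gc_corner e. \<forall>b\<in>gc_corner e. \<phi> (gc_mult a b) = \<phi> a O \<phi> b) \<and>
     \<phi> e = Id_on Y"

end

theory Submission
  imports Defs
begin

definition rep :: "'x set \<Rightarrow> 'l::complete_lattice \<Rightarrow> ('x \<Rightarrow> 'x \<Rightarrow> bool) \<Rightarrow> 'x \<Rightarrow> 'x \<Rightarrow> 'l" where
  "rep A c P = (\<lambda>x z. if x \<in> A \<and> z \<in> A \<and> P x z then c else bot)"

lemma sup_ind: "(SUP y. if B y then (c::'l::complete_lattice) else bot) = (if \<exists>y. B y then c else bot)"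
proof (cases "\<exists>y. B y")
  case True
  then obtain y where "B y" by blast
  hence "c \<le> (SUP y. if B y then c else bot)"
    by (metis (mono_tags, lifting) SUP_upper UNIV_I)
  moreover have "(SUP y. if B y then c else bot) \<le> c" by (rule SUP_least) auto
  ultimately show ?thesis using True by (simp add: antisym)
next
  case False
  thus ?thesis by simp
qed

lemma rep_mult: "gc_mult (rep A c P) (rep A c Q) = rep A c (\<lambda>x z. \<exists>y\<in>A. P x y \<and> Q y z)"
proof -
  have "\<And>x z. (SUP y. inf (rep A c P x y) (rep A c Q y z))
     = (SUP y. if x \<in> A \<and> z \<in> A \<and> y \<in> A \<and> P x y \<and> Q y z then c else bot)"
    by (rule SUP_cong) (auto simp: rep_def)
  hence "gc_mult (rep A c P) (rep A c Q) = (\<lambda>x z. if \<exists>y. x \<in> A \<and> z \<in> A \<and> y \<in> A \<and> P x y \<and> Q y z then c else bot)"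
    unfolding gc_mult_def by (simp only: sup_ind)
  thus ?thesis unfolding rep_def by (auto simp: fun_eq_iff)
qed

lemma mult_rep_left: "gc_mult (rep A c (=)) m = (\<lambda>x z. if x \<in> A then inf c (m x z) else bot)"
proof -
  have "\<And>x z. (SUP y. inf (rep A c (=) x y) (m y z))
     = (SUP y. if y = x then (if x \<in> A then inf c (m x z) else bot) else bot)"
    by (rule SUP_cong) (auto simp: rep_def)
  thus ?thesis unfolding gc_mult_def by (simp only: sup_ind) auto
qed

lemma mult_rep_right: "gc_mult m (rep A c (=)) = (\<lambda>x z. if z \<in> A then inf (m x z) c else bot)"
proof -
  have "\<And>x z. (SUP y. inf (m x y) (rep A c (=) y z))
     = (SUP y. if y = z then (if z \<in> A then inf (m x z) c else bot) else bot)"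
    by (rule SUP_cong) (auto simp: rep_def)
  thus ?thesis unfolding gc_mult_def by (simp only: sup_ind) auto
qed

lemma corner_eq:
  assumes atom: "\<And>y. inf c y = bot \<or> inf c y = (c::'l::complete_lattice)"
  shows "gc_corner (rep A c (=)) = range (rep A c)"
proof
  show "gc_corner (rep A c (=)) \<subseteq> range (rep A c)"
  proof
    fix r assume "r \<in> gc_corner (rep A c (=))"
    then obtain m where r: "r = gc_mult (gc_mult (rep A c (=)) m) (rep A c (=))"
      unfolding gc_corner_def by blast
    have "r = rep A c (\<lambda>x z. inf c (m x z) \<noteq> bot)"
    proof (unfold fun_eq_iff, intro allI)
      fix x z
      have e1: "inf (inf c (m x z)) c = inf c (m x z)" by (simp add: inf_commute inf_left_commute)
      show "r x z = rep A c (\<lambda>x z. inf c (m x z) \<noteq> bot) x z"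
        unfolding r mult_rep_left mult_rep_right unfolding rep_def
        using atom[of "m x z"] by (cases "x \<in> A"; cases "z \<in> A"; cases "inf c (m x z) = bot") (simp_all add: e1)
    qed
    thus "r \<in> range (rep A c)" by blast
  qed
next
  show "range (rep A c) \<subseteq> gc_corner (rep A c (=))"
  proof
    fix r assume "r \<in> range (rep A c)"
    then obtain P where r: "r = rep A c P" by blast
    have "gc_mult (gc_mult (rep A c (=)) r) (rep A c (=)) = r"
      unfolding r rep_mult by (auto simp: rep_def fun_eq_iff)
    thus "r \<in> gc_corner (rep A c (=))" unfolding gc_corner_def by (metis (mono_tags, lifting) mem_Collect_eq)
  qed
qed

theorem lemma10:
  assumes X4: "\<exists>A :: 'x set. finite A \<and> card A = 4"
    and nontriv: "\<exists>a b :: 'l::finite_distrib_lattice_complete. a \<noteq> b"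
  shows "\<exists>e :: 'x \<Rightarrow> 'x \<Rightarrow> 'l. gc_mult e e = e \<and>
           (\<exists>\<phi>. corner_iso_rel e {0..<4::nat} \<phi>)"
proof -
  obtain A :: "'x set" where A: "finite A" "card A = 4" using X4 by blast
  obtain g where g: "bij_betw g {0..<4::nat} A"
    using A by (metis ex_bij_betw_nat_finite)
  have "{x::'l. x \<noteq> bot} \<noteq> {}" using nontriv by (metis (mono_tags) empty_Collect_eq)
  then obtain c :: 'l where c: "c \<noteq> bot" and cmin: "\<And>b. b \<noteq> bot \<Longrightarrow> b \<le> c \<Longrightarrow> c = b"
    using finite_has_minimal[of "{x::'l. x \<noteq> bot}"] by auto
  have atom: "\<And>y. inf c y = bot \<or> inf c y = c"
    using cmin by (metis inf.cobounded1)
  define e where "e = rep A c (=)"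
  have idem: "gc_mult e e = e"
    unfolding e_def rep_mult by (auto simp: rep_def fun_eq_iff)
  define \<phi> where "\<phi> = (\<lambda>R::'x \<Rightarrow> 'x \<Rightarrow> 'l. {(i,j). i < 4 \<and> j < (4::nat) \<and> R (g i) (g j) \<noteq> bot})"
  have gA: "\<And>i. i < 4 \<Longrightarrow> g i \<in> A" using g by (auto simp: bij_betw_def)
  have gsurj: "\<And>x. x \<in> A \<Longrightarrow> \<exists>i<4. x = g i" using g by (auto simp: bij_betw_def image_iff)
  have ginj: "\<And>i j. i < 4 \<Longrightarrow> j < 4 \<Longrightarrow> g i = g j \<Longrightarrow> i = j"
    using g by (auto simp: bij_betw_def inj_on_def)
  have phirep: "\<And>P. \<phi> (rep A c P) = {(i,j). i < 4 \<and> j < 4 \<and> P (g i) (g j)}"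
    unfolding \<phi>_def rep_def using c gA by auto
  have corner: "gc_corner e = range (rep A c)" unfolding e_def by (rule corner_eq[OF atom])
  have inj: "inj_on \<phi> (gc_corner e)"
  proof (rule inj_onI)
    fix a b assume "a \<in> gc_corner e" "b \<in> gc_corner e" and eq: "\<phi> a = \<phi> b"
    then obtain P Q where a: "a = rep A c P" and b: "b = rep A c Q" using corner by blast
    have "\<And>x z. x \<in> A \<Longrightarrow> z \<in> A \<Longrightarrow> P x z = Q x z"
    proof -
      fix x z assume "x \<in> A" "z \<in> A"
      then obtain i j where "i < 4" "j < 4" "x = g i" "z = g j" using gsurj by blast
      thus "P x z = Q x z" using eq unfolding a b phirep by auto
    qed
    thus "a = b" unfolding a b rep_def fun_eq_iff by auto
  qed
  have surj: "\<phi> ` gc_corner e = Pow ({0..<4} \<times> {0..<4})"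
  proof
    show "\<phi> ` gc_corner e \<subseteq> Pow ({0..<4} \<times> {0..<4})" unfolding \<phi>_def by auto
  next
    show "Pow ({0..<4} \<times> {0..<4}) \<subseteq> \<phi> ` gc_corner e"
    proof
      fix S assume S: "S \<in> Pow ({0..<4::nat} \<times> {0..<4::nat})"
      define P where "P = (\<lambda>x z. \<exists>i j. i < 4 \<and> j < 4 \<and> x = g i \<and> z = g j \<and> (i,j) \<in> S)"
      have "\<phi> (rep A c P) = S" unfolding phirep P_def
      proof (intro set_eqI iffI)
        fix p assume "p \<in> {(i, j). i < 4 \<and> j < 4 \<and> (\<exists>ia ja. ia < 4 \<and> ja < 4 \<and> g i = g ia \<and> g j = g ja \<and> (ia, ja) \<in> S)}"
        then obtain a b ia ja where "p = (a,b)" "a < 4" "b < 4" "ia < 4" "ja < 4" "g a = g ia" "g b = g ja" "(ia, ja) \<in> S" by blast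
        moreover have "a = ia" "b = ja" using ginj calculation by blast+
        ultimately show "p \<in> S" by simp
      next
        fix p assume "p \<in> S"
        then obtain a b where "p = (a,b)" "a < 4" "b < 4" using S by force
        thus "p \<in> {(i, j). i < 4 \<and> j < 4 \<and> (\<exists>ia ja. ia < 4 \<and> ja < 4 \<and> g i = g ia \<and> g j = g ja \<and> (ia, ja) \<in> S)}"
          using \<open>p \<in> S\<close> by blast
      qed
      thus "S \<in> \<phi> ` gc_corner e" using corner by blast
    qed
  qed
  have hom: "\<forall>a\<in>gc_corner e. \<forall>b\<in>gc_corner e. \<phi> (gc_mult a b) = \<phi> a O \<phi> b"
  proof (intro ballI)
    fix a b assume "a \<in> gc_corner e" "b \<in> gc_corner e"
    then obtain P Q where a: "a = rep A c P" and b: "b = rep A c Q" using corner by blast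
    show "\<phi> (gc_mult a b) = \<phi> a O \<phi> b"
      unfolding a b rep_mult phirep using gsurj gA by (auto simp: relcomp_unfold)
  qed
  have ide: "\<phi> e = Id_on {0..<4}" unfolding e_def phirep Id_on_def using ginj by fastforce
  have "corner_iso_rel e {0..<4::nat} \<phi>"
    unfolding corner_iso_rel_def bij_betw_def using inj surj hom ide by blast
  thus ?thesis using idem by blast
qed

end
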